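(* Let $(\mathcal C,S,T)$ be an association schemoid whose underlying category $\mathcal C$ is a connected groupoid and with $T(f)=f^{-1}$ for all morphisms $f$. Let $H:\mathcal C\to\mathbb K\text{-Mod}$ be a functor, $D=\pi^*p^*H$ the induced natural system, and $D_+\to\mathcal E\xrightarrow{q}\mathcal C$ a linear extension. Let $\widetilde S=\{q^{-1}(\sigma)\}_{\sigma\in S}$. Then $(\mathcal E,\widetilde S)$ is a quasi-schemoid, $\mathcal E$ is a groupoid, $(\mathcal E,\widetilde S,\widetilde T)$ with $\widetilde T(\tilde f)=\tilde f^{-1}$ is an association schemoid, and $q:(\mathcal E,\widetilde S,\widetilde T)\to(\mathcal C,S,T)$ is a morphism of association schemoids. Moreover, for $\sigma,\tau,\mu\in\widetilde S$ one has $p^\sigma_{\tau\mu}=\#D_g\cdot p^{q(\sigma)}_{q(\tau)q(\mu)}$ for any morphism $g$ of $\mathcal C$ (the cardinality $\#D_g$ is independent of $g$).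
   Context: Write $s(f),t(f)$ for source and target. A quasi-schemoid is a pair $(\mathcal C,S)$ with $\mathcal C$ a small category and $S$ a partition of $mor(\mathcal C)$ into nonempty blocks such that for all $\sigma,\tau,\mu\in S$ and $f,g\in\mu$ the sets $\{(a,b)\in\sigma\times\tau: s(a)=t(b), a\circ b=f\}$ and the analogous set for $g$ have equal cardinality, denoted $p^\mu_{\sigma\tau}$. An association schemoid is a triple $(\mathcal C,S,T)$ where $(\mathcal C,S)$ is a quasi-schemoid, every block containing an endomorphism consists only of endomorphisms, and $T$ is a contravariant endofunctor with $T^2=\mathrm{id}$ and $\{T(f):f\in\sigma\}\in S$ for all $\sigma$. A morphism of association schemoids is a functor mapping each block into a block and commuting with the $T$'s; $q(\sigma)$ denotes the block containing the image of $\sigma$. The category of factorizations $F(\mathcal C)$ has objects the morphisms of $\mathcal C$ and morphisms $f\to g$ the pairs $(\alpha,\beta)$ with $g=\alpha f\beta$. A natural system is a functor $D:F(\mathcal C)\to\mathbb K\text{-Mod}$; $f_*=D(f,1)$, $g^*=D(1,g)$. $\pi:F(\mathcal C)\to\mathcal C^{op}\times\mathcal C$ is $f\mapsto(s(f),t(f))$, $(\alpha,\beta)\mapsto(\beta,\alpha)$, and $p:\mathcal C^{op}\times\mathcal C\to\mathcal C$ is the projection to the second factor; thus $D_f=H(t(f))$. A linear extension $D_+\to\mathcal E\xrightarrow{q}\mathcal C$ consists of a category $\mathcal E$ with the same objects and a full functor $q$ that is the identity on objects, such that each $D_f$ acts transitively and freely on $q^{-1}(f)$ (written $f_0+\alpha$)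 and $(f_0+\alpha)(g_0+\beta)=f_0g_0+f_*\beta+g^*\alpha$. *)

theory Defs
  imports "HOL-Algebra.Module" "HOL-Library.Equipollence"
begin

record ('o, 'm) cat =
  cobj :: "'o set"
  cmor :: "'m set"
  cdom :: "'m \<Rightarrow> 'o"
  ccod :: "'m \<Rightarrow> 'o"
  cid  :: "'o \<Rightarrow> 'm"
  ccomp :: "'m \<Rightarrow> 'm \<Rightarrow> 'm"   (* ccomp C g f = g \<circ> f, defined when cdom g = ccod f *)

definition category :: "('o, 'm) cat \<Rightarrow> bool" where
  "category C \<longleftrightarrow>
     (\<forall>f\<in>cmor C. cdom C f \<in> cobj C \<and> ccod C f \<in> cobj C) \<and>
     (\<forall>x\<in>cobj C. cid C x \<in> cmor C \<and> cdom C (cid C x) = x \<and> ccod C (cid C x) = x) \<and>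
     (\<forall>f\<in>cmor C. \<forall>g\<in>cmor C. cdom C g = ccod C f \<longrightarrow>
        ccomp C g f \<in> cmor C \<and> cdom C (ccomp C g f) = cdom C f \<and> ccod C (ccomp C g f) = ccod C g) \<and>
     (\<forall>f\<in>cmor C. \<forall>g\<in>cmor C. \<forall>h\<in>cmor C. cdom C g = ccod C f \<longrightarrow> cdom C h = ccod C g \<longrightarrow>
        ccomp C h (ccomp C g f) = ccomp C (ccomp C h g) f) \<and>
     (\<forall>f\<in>cmor C. ccomp C (cid C (ccod C f)) f = f \<and> ccomp C f (cid C (cdom C f)) = f)"

definition is_inverse :: "('o, 'm) cat \<Rightarrow> 'm \<Rightarrow> 'm \<Rightarrow> bool" where
  "is_inverse C f g \<longleftrightarrow> g \<in> cmor C \<and> cdom C g = ccod C f \<and> ccod C g = cdom C f \<and>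
     ccomp C g f = cid C (cdom C f) \<and> ccomp C f g = cid C (ccod C f)"

definition inv_mor :: "('o, 'm) cat \<Rightarrow> 'm \<Rightarrow> 'm" where
  "inv_mor C f = (THE g. is_inverse C f g)"

definition groupoid :: "('o, 'm) cat \<Rightarrow> bool" where
  "groupoid C \<longleftrightarrow> category C \<and> (\<forall>f\<in>cmor C. \<exists>g. is_inverse C f g)"

definition connected :: "('o, 'm) cat \<Rightarrow> bool" where
  "connected C \<longleftrightarrow> (\<forall>x\<in>cobj C. \<forall>y\<in>cobj C. \<exists>f\<in>cmor C. cdom C f = x \<and> ccod C f = y)"

definition is_functor :: "('o, 'm) cat \<Rightarrow> ('p, 'n) cat \<Rightarrow> ('o \<Rightarrow> 'p) \<Rightarrow> ('m \<Rightarrow> 'n) \<Rightarrow> bool" where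
  "is_functor C D Fo Fm \<longleftrightarrow>
     (\<forall>x\<in>cobj C. Fo x \<in> cobj D) \<and> (\<forall>f\<in>cmor C. Fm f \<in> cmor D) \<and>
     (\<forall>f\<in>cmor C. cdom D (Fm f) = Fo (cdom C f) \<and> ccod D (Fm f) = Fo (ccod C f)) \<and>
     (\<forall>x\<in>cobj C. Fm (cid C x) = cid D (Fo x)) \<and>
     (\<forall>f\<in>cmor C. \<forall>g\<in>cmor C. cdom C g = ccod C f \<longrightarrow> Fm (ccomp C g f) = ccomp D (Fm g) (Fm f))"

definition contra_endofunctor :: "('o, 'm) cat \<Rightarrow> ('o \<Rightarrow> 'o) \<Rightarrow> ('m \<Rightarrow> 'm) \<Rightarrow> bool" where
  "contra_endofunctor C To Tm \<longleftrightarrow>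
     (\<forall>x\<in>cobj C. To x \<in> cobj C) \<and> (\<forall>f\<in>cmor C. Tm f \<in> cmor C) \<and>
     (\<forall>f\<in>cmor C. cdom C (Tm f) = To (ccod C f) \<and> ccod C (Tm f) = To (cdom C f)) \<and>
     (\<forall>x\<in>cobj C. Tm (cid C x) = cid C (To x)) \<and>
     (\<forall>f\<in>cmor C. \<forall>g\<in>cmor C. cdom C g = ccod C f \<longrightarrow> Tm (ccomp C g f) = ccomp C (Tm f) (Tm g))"

definition pairs :: "('o, 'm) cat \<Rightarrow> 'm set \<Rightarrow> 'm set \<Rightarrow> 'm \<Rightarrow> ('m \<times> 'm) set" where
  "pairs C \<sigma> \<tau> f = {(a, b). a \<in> \<sigma> \<and> b \<in> \<tau> \<and> cdom C a = ccod C b \<and> ccomp C a b = f}"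

definition is_partition :: "'m set \<Rightarrow> 'm set set \<Rightarrow> bool" where
  "is_partition M S \<longleftrightarrow> \<Union>S = M \<and> (\<forall>\<sigma>\<in>S. \<sigma> \<noteq> {}) \<and>
     (\<forall>\<sigma>\<in>S. \<forall>\<tau>\<in>S. \<sigma> \<noteq> \<tau> \<longrightarrow> \<sigma> \<inter> \<tau> = {})"

text \<open>Equal cardinality rendered as equipollence (cardinalities may be infinite).\<close>
definition quasi_schemoid :: "('o, 'm) cat \<Rightarrow> 'm set set \<Rightarrow> bool" where
  "quasi_schemoid C S \<longleftrightarrow> category C \<and> is_partition (cmor C) S \<and>
     (\<forall>\<sigma>\<in>S. \<forall>\<tau>\<in>S. \<forall>\<mu>\<in>S. \<forall>f\<in>\<mu>. \<forall>g\<in>\<mu>. pairs C \<sigma> \<tau> f \<approx> pairs C \<sigma> \<tau> g)"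

definition association_schemoid ::
  "('o, 'm) cat \<Rightarrow> 'm set set \<Rightarrow> ('o \<Rightarrow> 'o) \<Rightarrow> ('m \<Rightarrow> 'm) \<Rightarrow> bool" where
  "association_schemoid C S To Tm \<longleftrightarrow> quasi_schemoid C S \<and>
     (\<forall>\<sigma>\<in>S. (\<exists>f\<in>\<sigma>. cdom C f = ccod C f) \<longrightarrow> (\<forall>f\<in>\<sigma>. cdom C f = ccod C f)) \<and>
     contra_endofunctor C To Tm \<and>
     (\<forall>x\<in>cobj C. To (To x) = x) \<and> (\<forall>f\<in>cmor C. Tm (Tm f) = f) \<and>
     (\<forall>\<sigma>\<in>S. Tm ` \<sigma> \<in> S)"

definition as_morphism ::
  "('o, 'm) cat \<Rightarrow> 'm set set \<Rightarrow> ('o \<Rightarrow> 'o) \<Rightarrow> ('m \<Rightarrow> 'm) \<Rightarrow>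
   ('p, 'n) cat \<Rightarrow> 'n set set \<Rightarrow> ('p \<Rightarrow> 'p) \<Rightarrow> ('n \<Rightarrow> 'n) \<Rightarrow>
   ('o \<Rightarrow> 'p) \<Rightarrow> ('m \<Rightarrow> 'n) \<Rightarrow> bool" where
  "as_morphism C S To Tm C' S' To' Tm' Fo Fm \<longleftrightarrow> is_functor C C' Fo Fm \<and>
     (\<forall>\<sigma>\<in>S. \<exists>\<tau>\<in>S'. Fm ` \<sigma> \<subseteq> \<tau>) \<and>
     (\<forall>x\<in>cobj C. Fo (To x) = To' (Fo x)) \<and> (\<forall>f\<in>cmor C. Fm (Tm f) = Tm' (Fm f))"

text \<open>q(sigma): the block of S containing the image of sigma\<close>
definition img_block :: "'n set set \<Rightarrow> ('m \<Rightarrow> 'n) \<Rightarrow> 'm set \<Rightarrow> 'n set" where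
  "img_block S F \<sigma> = (THE \<tau>. \<tau> \<in> S \<and> F ` \<sigma> \<subseteq> \<tau>)"

definition linear_map :: "('k, 'z) ring_scheme \<Rightarrow> ('k, 'v) module \<Rightarrow> ('k, 'v) module \<Rightarrow> ('v \<Rightarrow> 'v) \<Rightarrow> bool" where
  "linear_map K M N h \<longleftrightarrow> (\<forall>x\<in>carrier M. h x \<in> carrier N) \<and>
     (\<forall>x\<in>carrier M. \<forall>y\<in>carrier M. h (x \<oplus>\<^bsub>M\<^esub> y) = h x \<oplus>\<^bsub>N\<^esub> h y) \<and>
     (\<forall>a\<in>carrier K. \<forall>x\<in>carrier M. h (a \<odot>\<^bsub>M\<^esub> x) = a \<odot>\<^bsub>N\<^esub> h x)"

definition mod_functor :: "('o, 'm) cat \<Rightarrow> 'k ring \<Rightarrow> ('o \<Rightarrow> ('k, 'v) module) \<Rightarrow> ('m \<Rightarrow> 'v \<Rightarrow> 'v) \<Rightarrow> bool" where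
  "mod_functor C K H Hm \<longleftrightarrow> cring K \<and>
     (\<forall>x\<in>cobj C. module K (H x)) \<and>
     (\<forall>f\<in>cmor C. linear_map K (H (cdom C f)) (H (ccod C f)) (Hm f)) \<and>
     (\<forall>x\<in>cobj C. \<forall>v\<in>carrier (H x). Hm (cid C x) v = v) \<and>
     (\<forall>f\<in>cmor C. \<forall>g\<in>cmor C. cdom C g = ccod C f \<longrightarrow>
        (\<forall>v\<in>carrier (H (cdom C f)). Hm (ccomp C g f) v = Hm g (Hm f v)))"

text \<open>Linear extension D_+ \<rightarrow> E \<rightarrow> C for the natural system D = pi^* p^* H, so that
  D_f = H(t f), f_* = D(f,1) = H(f), g^* = D(1,g) = identity.  The action of
  D_{q e} on q^{-1}(q e) is written act e alpha = e + alpha.\<close>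
definition linear_extension ::
  "('o, 'm) cat \<Rightarrow> 'k ring \<Rightarrow> ('o \<Rightarrow> ('k, 'v) module) \<Rightarrow> ('m \<Rightarrow> 'v \<Rightarrow> 'v) \<Rightarrow>
   ('o, 'e) cat \<Rightarrow> ('e \<Rightarrow> 'm) \<Rightarrow> ('e \<Rightarrow> 'v \<Rightarrow> 'e) \<Rightarrow> bool" where
  "linear_extension C K H Hm E q act \<longleftrightarrow>
     category E \<and> cobj E = cobj C \<and> is_functor E C id q \<and>
     \<comment> \<open>q is full\<close>
     (\<forall>x\<in>cobj E. \<forall>y\<in>cobj E. \<forall>f\<in>cmor C. cdom C f = x \<and> ccod C f = y \<longrightarrow>
        (\<exists>e\<in>cmor E. cdom E e = x \<and> ccod E e = y \<and> q e = f)) \<and>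
     \<comment> \<open>D_f acts on q^{-1}(f)\<close>
     (\<forall>e\<in>cmor E. \<forall>\<alpha>\<in>carrier (H (ccod C (q e))). act e \<alpha> \<in> cmor E \<and> q (act e \<alpha>) = q e) \<and>
     (\<forall>e\<in>cmor E. act e \<zero>\<^bsub>H (ccod C (q e))\<^esub> = e) \<and>
     (\<forall>e\<in>cmor E. \<forall>\<alpha>\<in>carrier (H (ccod C (q e))). \<forall>\<beta>\<in>carrier (H (ccod C (q e))).
        act (act e \<alpha>) \<beta> = act e (\<alpha> \<oplus>\<^bsub>H (ccod C (q e))\<^esub> \<beta>)) \<and>
     \<comment> \<open>transitively and freely\<close>
     (\<forall>e\<in>cmor E. \<forall>e'\<in>cmor E. q e' = q e \<longrightarrow> (\<exists>!\<alpha>. \<alpha> \<in> carrier (H (ccod C (q e))) \<and> e' = act e \<alpha>)) \<and>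
     \<comment> \<open>(f0 + alpha)(g0 + beta) = f0 g0 + f_* beta + g^* alpha\<close>
     (\<forall>f0\<in>cmor E. \<forall>g0\<in>cmor E. cdom E f0 = ccod E g0 \<longrightarrow>
        (\<forall>\<alpha>\<in>carrier (H (ccod C (q f0))). \<forall>\<beta>\<in>carrier (H (ccod C (q g0))).
          ccomp E (act f0 \<alpha>) (act g0 \<beta>) =
            act (ccomp E f0 g0) (Hm (q f0) \<beta> \<oplus>\<^bsub>H (ccod C (q f0))\<^esub> \<alpha>)))"

end

theory Submission
  imports Defs
begin


lemma cat_dom: "category C \<Longrightarrow> f \<in> cmor C \<Longrightarrow> cdom C f \<in> cobj C"
  and cat_cod: "category C \<Longrightarrow> f \<in> cmor C \<Longrightarrow> ccod C f \<in> cobj C"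
  and cat_id: "category C \<Longrightarrow> x \<in> cobj C \<Longrightarrow> cid C x \<in> cmor C"
  and cat_id_dom: "category C \<Longrightarrow> x \<in> cobj C \<Longrightarrow> cdom C (cid C x) = x"
  and cat_id_cod: "category C \<Longrightarrow> x \<in> cobj C \<Longrightarrow> ccod C (cid C x) = x"
  and cat_comp: "category C \<Longrightarrow> f \<in> cmor C \<Longrightarrow> g \<in> cmor C \<Longrightarrow> cdom C g = ccod C f \<Longrightarrow> ccomp C g f \<in> cmor C"
  and cat_comp_dom: "category C \<Longrightarrow> f \<in> cmor C \<Longrightarrow> g \<in> cmor C \<Longrightarrow> cdom C g = ccod C f \<Longrightarrow> cdom C (ccomp C g f) = cdom C f"
  and cat_comp_cod: "category C \<Longrightarrow> f \<in> cmor C \<Longrightarrow> g \<in> cmor C \<Longrightarrow> cdom C g = ccod C f \<Longrightarrow> ccod C (ccomp C g f) = ccod C g"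
  and cat_assoc: "category C \<Longrightarrow> f \<in> cmor C \<Longrightarrow> g \<in> cmor C \<Longrightarrow> h \<in> cmor C \<Longrightarrow> cdom C g = ccod C f \<Longrightarrow> cdom C h = ccod C g \<Longrightarrow>
        ccomp C h (ccomp C g f) = ccomp C (ccomp C h g) f"
  and cat_idl: "category C \<Longrightarrow> f \<in> cmor C \<Longrightarrow> ccomp C (cid C (ccod C f)) f = f"
  and cat_idr: "category C \<Longrightarrow> f \<in> cmor C \<Longrightarrow> ccomp C f (cid C (cdom C f)) = f"
  unfolding category_def by blast+

lemmas cat_simps = cat_dom cat_cod cat_id cat_id_dom cat_id_cod cat_comp cat_comp_dom cat_comp_cod cat_idl cat_idr

lemma inv_unique:
  assumes "category C" "f \<in> cmor C" "is_inverse C f g" "is_inverse C f g'"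
  shows "g = g'"
proof -
  have g: "g \<in> cmor C" "cdom C g = ccod C f" "ccod C g = cdom C f" "ccomp C g f = cid C (cdom C f)"
    using assms(3) unfolding is_inverse_def by auto
  have g': "g' \<in> cmor C" "cdom C g' = ccod C f" "ccod C g' = cdom C f" "ccomp C f g' = cid C (ccod C f)"
    using assms(4) unfolding is_inverse_def by auto
  have "g = ccomp C g (cid C (ccod C f))" using cat_idr[OF assms(1) g(1)] g by simp
  also have "\<dots> = ccomp C g (ccomp C f g')" using g' by simp
  also have "\<dots> = ccomp C (ccomp C g f) g'" using cat_assoc[OF assms(1) g'(1) assms(2) g(1)] g g' by simp
  also have "\<dots> = g'" using g g' cat_idl[OF assms(1) g'(1)] by simp
  finally show ?thesis .
qed

lemma inv_mor_is: "groupoid C \<Longrightarrow> f \<in> cmor C \<Longrightarrow> is_inverse C f (inv_mor C f)"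
  unfolding inv_mor_def groupoid_def
  by (metis (mono_tags, lifting) inv_unique theI)

lemma is_inverse_sym: "is_inverse C f g \<Longrightarrow> f \<in> cmor C \<Longrightarrow> is_inverse C g f"
  unfolding is_inverse_def by auto

lemma inv_eqI: "groupoid C \<Longrightarrow> f \<in> cmor C \<Longrightarrow> is_inverse C f g \<Longrightarrow> inv_mor C f = g"
  by (metis groupoid_def inv_mor_is inv_unique)

lemma inv_facts:
  assumes "groupoid C" "f \<in> cmor C"
  shows "inv_mor C f \<in> cmor C" "cdom C (inv_mor C f) = ccod C f" "ccod C (inv_mor C f) = cdom C f"
    "ccomp C (inv_mor C f) f = cid C (cdom C f)" "ccomp C f (inv_mor C f) = cid C (ccod C f)"
  using inv_mor_is[OF assms] unfolding is_inverse_def by auto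

lemma inv_inv: "groupoid C \<Longrightarrow> f \<in> cmor C \<Longrightarrow> inv_mor C (inv_mor C f) = f"
  by (meson inv_eqI inv_facts(1) inv_mor_is is_inverse_sym)

lemma inv_id: assumes "groupoid C" "x \<in> cobj C" shows "inv_mor C (cid C x) = cid C x"
proof -
  have c: "category C" using assms(1) groupoid_def by blast
  show ?thesis
    apply (rule inv_eqI[OF assms(1) cat_id[OF c assms(2)]])
    unfolding is_inverse_def using c assms(2)
    by (metis cat_id cat_id_cod cat_id_dom cat_idr)
qed

lemma inv_comp:
  assumes gr: "groupoid C" and f: "f \<in> cmor C" and g: "g \<in> cmor C" and fg: "cdom C g = ccod C f"
  shows "inv_mor C (ccomp C g f) = ccomp C (inv_mor C f) (inv_mor C g)"
proof -
  have c: "category C" using gr groupoid_def by blast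
  note fi = inv_facts[OF gr f] and gi = inv_facts[OF gr g]
  have gf: "ccomp C g f \<in> cmor C" "cdom C (ccomp C g f) = cdom C f" "ccod C (ccomp C g f) = ccod C g"
    using c f g fg by (simp_all add: cat_simps)
  have ii: "ccomp C (inv_mor C f) (inv_mor C g) \<in> cmor C"
    "cdom C (ccomp C (inv_mor C f) (inv_mor C g)) = ccod C g"
    "ccod C (ccomp C (inv_mor C f) (inv_mor C g)) = cdom C f"
    using c fi gi fg by (simp_all add: cat_simps)
  have e1: "ccomp C (ccomp C (inv_mor C f) (inv_mor C g)) (ccomp C g f) = cid C (cdom C f)"
  proof -
    have "ccomp C (ccomp C (inv_mor C f) (inv_mor C g)) (ccomp C g f)
        = ccomp C (inv_mor C f) (ccomp C (inv_mor C g) (ccomp C g f))"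
      using cat_assoc[OF c gf(1) gi(1) fi(1)] gi fi gf fg by simp
    also have "ccomp C (inv_mor C g) (ccomp C g f) = ccomp C (ccomp C (inv_mor C g) g) f"
      using cat_assoc[OF c f g gi(1)] gi fg by simp
    also have "\<dots> = f" using gi fg cat_idl[OF c f] by simp
    finally show ?thesis using fi by simp
  qed
  have e2: "ccomp C (ccomp C g f) (ccomp C (inv_mor C f) (inv_mor C g)) = cid C (ccod C g)"
  proof -
    have "ccomp C (ccomp C g f) (ccomp C (inv_mor C f) (inv_mor C g))
        = ccomp C g (ccomp C f (ccomp C (inv_mor C f) (inv_mor C g)))"
      using cat_assoc[OF c ii(1) f g] ii fg by simp
    also have "ccomp C f (ccomp C (inv_mor C f) (inv_mor C g)) = ccomp C (ccomp C f (inv_mor C f)) (inv_mor C g)"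
      using cat_assoc[OF c gi(1) fi(1) f] gi fi fg by simp
    also have "\<dots> = inv_mor C g" using fi fg gi cat_idl[OF c gi(1)] by simp
    finally show ?thesis using gi by simp
  qed
  show ?thesis
    apply (rule inv_eqI[OF gr gf(1)])
    unfolding is_inverse_def using ii gf e1 e2 by simp
qed

lemma left_inv_groupoid:
  assumes c: "category C"
    and L: "\<And>f. f \<in> cmor C \<Longrightarrow> \<exists>h\<in>cmor C. cdom C h = ccod C f \<and> ccod C h = cdom C f \<and> ccomp C h f = cid C (cdom C f)"
  shows "groupoid C"
  unfolding groupoid_def
proof (intro conjI c ballI)
  fix f assume f: "f \<in> cmor C"
  obtain h where h: "h \<in> cmor C" "cdom C h = ccod C f" "ccod C h = cdom C f" "ccomp C h f = cid C (cdom C f)"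
    using L[OF f] by blast
  obtain k where k: "k \<in> cmor C" "cdom C k = ccod C h" "ccod C k = cdom C h" "ccomp C k h = cid C (cdom C h)"
    using L[OF h(1)] by blast
  have "k = ccomp C k (ccomp C h f)" using k h cat_idr[OF c k(1)] by simp
  also have "\<dots> = ccomp C (ccomp C k h) f" using cat_assoc[OF c f h(1) k(1)] h k by simp
  also have "\<dots> = f" using k h cat_idl[OF c f] by simp
  finally have kf: "k = f" .
  show "\<exists>g. is_inverse C f g" unfolding is_inverse_def
    using h k kf by auto
qed

lemma functor_inverse:
  assumes F: "is_functor E C id q" and cE: "category E" and e: "e \<in> cmor E" and inv: "is_inverse E e h"
  shows "is_inverse C (q e) (q h)"
proof -
  have h: "h \<in> cmor E" "cdom E h = ccod E e" "ccod E h = cdom E e" "ccomp E h e = cid E (cdom E e)"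
    "ccomp E e h = cid E (ccod E e)" using inv unfolding is_inverse_def by auto
  show ?thesis unfolding is_inverse_def using F h e cE unfolding is_functor_def
    by (metis cat_cod cat_dom id_apply)
qed



lemma lin_zero: assumes "module K M" "module K N" "linear_map K M N h" shows "h \<zero>\<^bsub>M\<^esub> = \<zero>\<^bsub>N\<^esub>"
proof -
  interpret M: module K M by fact
  interpret N: module K N by fact
  have z: "h \<zero>\<^bsub>M\<^esub> \<in> carrier N" using assms(3) unfolding linear_map_def by auto
  have "h \<zero>\<^bsub>M\<^esub> \<oplus>\<^bsub>N\<^esub> h \<zero>\<^bsub>M\<^esub> = h \<zero>\<^bsub>M\<^esub> \<oplus>\<^bsub>N\<^esub> \<zero>\<^bsub>N\<^esub>"
    using assms(3) z unfolding linear_map_def by (metis M.zero_closed M.l_zero N.r_zero)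
  then show ?thesis using z by (metis N.add.right_cancel N.zero_closed N.a_comm) 
qed

lemma mod_zero: assumes "module K M" shows "\<zero>\<^bsub>M\<^esub> \<in> carrier M"
proof - interpret module K M by fact show ?thesis by simp qed
lemma mod_lzero: assumes "module K M" "x \<in> carrier M" shows "\<zero>\<^bsub>M\<^esub> \<oplus>\<^bsub>M\<^esub> x = x"
proof - interpret module K M by fact show ?thesis using assms(2) by simp qed

locale ctx55 =
  fixes C :: "('o, 'm) cat" and S :: "'m set set" and To :: "'o \<Rightarrow> 'o" and Tm :: "'m \<Rightarrow> 'm"
    and K :: "'k ring" and H :: "'o \<Rightarrow> ('k, 'v) module" and Hm :: "'m \<Rightarrow> 'v \<Rightarrow> 'v"
    and E :: "('o, 'e) cat" and q :: "'e \<Rightarrow> 'm" and act :: "'e \<Rightarrow> 'v \<Rightarrow> 'e"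
  assumes assoc: "association_schemoid C S To Tm"
    and grpd: "groupoid C"
    and conn: "connected C"
    and Tinv: "\<forall>f\<in>cmor C. Tm f = inv_mor C f"
    and Hfun: "mod_functor C K H Hm"
    and ext: "linear_extension C K H Hm E q act"
begin

lemma cC: "category C" using grpd groupoid_def by blast
lemma cE: "category E" using ext unfolding linear_extension_def by blast
lemma objE: "cobj E = cobj C" using ext unfolding linear_extension_def by blast
lemma qfun: "is_functor E C id q" using ext unfolding linear_extension_def by blast
lemma qmor: "e \<in> cmor E \<Longrightarrow> q e \<in> cmor C" using qfun unfolding is_functor_def by blast
lemma qdom: "e \<in> cmor E \<Longrightarrow> cdom C (q e) = cdom E e" using qfun unfolding is_functor_def by auto
lemma qcod: "e \<in> cmor E \<Longrightarrow> ccod C (q e) = ccod E e" using qfun unfolding is_functor_def by auto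
lemma qid: "x \<in> cobj E \<Longrightarrow> q (cid E x) = cid C x" using qfun unfolding is_functor_def by auto
lemma qcomp: "e1 \<in> cmor E \<Longrightarrow> e2 \<in> cmor E \<Longrightarrow> cdom E e2 = ccod E e1 \<Longrightarrow> q (ccomp E e2 e1) = ccomp C (q e2) (q e1)"
  using qfun unfolding is_functor_def by blast

lemma lift: assumes "f \<in> cmor C" shows "\<exists>e\<in>cmor E. q e = f"
proof -
  have "cdom C f \<in> cobj E" "ccod C f \<in> cobj E" using cat_dom[OF cC assms] cat_cod[OF cC assms] objE by auto
  moreover have "\<forall>x\<in>cobj E. \<forall>y\<in>cobj E. \<forall>f\<in>cmor C. cdom C f = x \<and> ccod C f = y \<longrightarrow>
        (\<exists>e\<in>cmor E. cdom E e = x \<and> ccod E e = y \<and> q e = f)"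
    using ext unfolding linear_extension_def by (elim conjE) assumption
  ultimately show ?thesis using assms by blast
qed

lemma modH: "x \<in> cobj C \<Longrightarrow> module K (H x)" using Hfun unfolding mod_functor_def by blast
lemma linHm: "f \<in> cmor C \<Longrightarrow> linear_map K (H (cdom C f)) (H (ccod C f)) (Hm f)"
  using Hfun unfolding mod_functor_def by blast

lemma ext_c1: "\<forall>e\<in>cmor E. \<forall>\<alpha>\<in>carrier (H (ccod C (q e))). act e \<alpha> \<in> cmor E \<and> q (act e \<alpha>) = q e"
  using ext unfolding linear_extension_def by (elim conjE) assumption
lemma ext_c2: "\<forall>e\<in>cmor E. act e \<zero>\<^bsub>H (ccod C (q e))\<^esub> = e"
  using ext unfolding linear_extension_def by (elim conjE) assumption
lemma ext_c3: "\<forall>e\<in>cmor E. \<forall>e'\<in>cmor E. q e' = q e \<longrightarrow> (\<exists>!\<alpha>. \<alpha> \<in> carrier (H (ccod C (q e))) \<and> e' = act e \<alpha>)"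
  using ext unfolding linear_extension_def by (elim conjE) assumption
lemma ext_c4: "\<forall>f0\<in>cmor E. \<forall>g0\<in>cmor E. cdom E f0 = ccod E g0 \<longrightarrow>
        (\<forall>\<alpha>\<in>carrier (H (ccod C (q f0))). \<forall>\<beta>\<in>carrier (H (ccod C (q g0))).
          ccomp E (act f0 \<alpha>) (act g0 \<beta>) =
            act (ccomp E f0 g0) (Hm (q f0) \<beta> \<oplus>\<^bsub>H (ccod C (q f0))\<^esub> \<alpha>))"
  using ext unfolding linear_extension_def by (elim conjE) assumption

lemma act_mor: "e \<in> cmor E \<Longrightarrow> \<alpha> \<in> carrier (H (ccod C (q e))) \<Longrightarrow> act e \<alpha> \<in> cmor E"
  using ext_c1 by blast
lemma act_q: "e \<in> cmor E \<Longrightarrow> \<alpha> \<in> carrier (H (ccod C (q e))) \<Longrightarrow> q (act e \<alpha>) = q e"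
  using ext_c1 by blast
lemma act_zero: "e \<in> cmor E \<Longrightarrow> act e \<zero>\<^bsub>H (ccod C (q e))\<^esub> = e"
  using ext_c2 by blast
lemma act_ex1: "e \<in> cmor E \<Longrightarrow> e' \<in> cmor E \<Longrightarrow> q e' = q e \<Longrightarrow> (\<exists>!\<alpha>. \<alpha> \<in> carrier (H (ccod C (q e))) \<and> e' = act e \<alpha>)"
  using ext_c3 by blast
lemma act_comp: "f0 \<in> cmor E \<Longrightarrow> g0 \<in> cmor E \<Longrightarrow> cdom E f0 = ccod E g0 \<Longrightarrow>
        \<alpha> \<in> carrier (H (ccod C (q f0))) \<Longrightarrow> \<beta> \<in> carrier (H (ccod C (q g0))) \<Longrightarrow>
          ccomp E (act f0 \<alpha>) (act g0 \<beta>) =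
            act (ccomp E f0 g0) (Hm (q f0) \<beta> \<oplus>\<^bsub>H (ccod C (q f0))\<^esub> \<alpha>)"
  using ext_c4 by blast

lemma act_dom: "e \<in> cmor E \<Longrightarrow> \<alpha> \<in> carrier (H (ccod C (q e))) \<Longrightarrow> cdom E (act e \<alpha>) = cdom E e"
  using qdom[OF act_mor] act_q qdom by metis
lemma act_cod: "e \<in> cmor E \<Longrightarrow> \<alpha> \<in> carrier (H (ccod C (q e))) \<Longrightarrow> ccod E (act e \<alpha>) = ccod E e"
  using qcod[OF act_mor] act_q qcod by metis

lemma act_inj: assumes e: "e \<in> cmor E" and a: "\<alpha> \<in> carrier (H (ccod C (q e)))" and b: "\<beta> \<in> carrier (H (ccod C (q e)))"
   and eq: "act e \<alpha> = act e \<beta>" shows "\<alpha> = \<beta>"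
proof -
  have "\<exists>!\<gamma>. \<gamma> \<in> carrier (H (ccod C (q e))) \<and> act e \<alpha> = act e \<gamma>"
    using act_ex1[OF e act_mor[OF e a] act_q[OF e a]] .
  then show ?thesis using a b eq by blast
qed

lemma act_surj: "e \<in> cmor E \<Longrightarrow> e' \<in> cmor E \<Longrightarrow> q e' = q e \<Longrightarrow> \<exists>\<alpha>\<in>carrier (H (ccod C (q e))). e' = act e \<alpha>"
  using act_ex1 by blast

lemma comp_zero:
  assumes f0: "f0 \<in> cmor E" and g0: "g0 \<in> cmor E" and d: "cdom E f0 = ccod E g0"
    and a: "\<alpha> \<in> carrier (H (ccod C (q f0)))"
  shows "ccomp E (act f0 \<alpha>) g0 = act (ccomp E f0 g0) \<alpha>"
proof -
  have o1: "ccod C (q g0) \<in> cobj C" "ccod C (q f0) \<in> cobj C" using cat_cod[OF cC qmor[OF g0]] cat_cod[OF cC qmor[OF f0]] by auto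
  have eq: "cdom C (q f0) = ccod C (q g0)" using d qdom qcod f0 g0 by simp
  have z: "\<zero>\<^bsub>H (ccod C (q g0))\<^esub> \<in> carrier (H (ccod C (q g0)))"
    using modH[OF o1(1)] by (rule mod_zero)
  have hz: "Hm (q f0) \<zero>\<^bsub>H (ccod C (q g0))\<^esub> = \<zero>\<^bsub>H (ccod C (q f0))\<^esub>"
    using lin_zero[OF modH[OF o1(1)] modH[OF o1(2)]] linHm[OF qmor[OF f0]] eq by simp
  have "ccomp E (act f0 \<alpha>) g0 = ccomp E (act f0 \<alpha>) (act g0 \<zero>\<^bsub>H (ccod C (q g0))\<^esub>)"
    using act_zero g0 by simp
  also have "\<dots> = act (ccomp E f0 g0) (\<zero>\<^bsub>H (ccod C (q f0))\<^esub> \<oplus>\<^bsub>H (ccod C (q f0))\<^esub> \<alpha>)"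
    using act_comp[OF f0 g0 d a z] hz by simp
  also have "\<zero>\<^bsub>H (ccod C (q f0))\<^esub> \<oplus>\<^bsub>H (ccod C (q f0))\<^esub> \<alpha> = \<alpha>"
    using modH[OF o1(2)] a by (simp add: mod_lzero)
  finally show ?thesis .
qed

lemma comp_cod: "f0 \<in> cmor E \<Longrightarrow> g0 \<in> cmor E \<Longrightarrow> cdom E f0 = ccod E g0 \<Longrightarrow>
   ccod C (q (ccomp E f0 g0)) = ccod C (q f0)"
  by (simp add: cE cat_comp cat_comp_cod qcod)

lemma cancel:
  assumes a1: "a1 \<in> cmor E" and a2: "a2 \<in> cmor E" and b: "b \<in> cmor E" and qa: "q a1 = q a2"
    and d1: "cdom E a1 = ccod E b" and d2: "cdom E a2 = ccod E b" and c: "ccomp E a1 b = ccomp E a2 b"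
  shows "a1 = a2"
proof -
  obtain \<alpha> where al: "\<alpha> \<in> carrier (H (ccod C (q a1)))" "a2 = act a1 \<alpha>" using act_surj[OF a1 a2] qa by metis
  have o: "ccod C (q a1) \<in> cobj C" using cat_cod[OF cC qmor[OF a1]] .
  have z: "\<zero>\<^bsub>H (ccod C (q a1))\<^esub> \<in> carrier (H (ccod C (q a1)))"
    using modH[OF o] by (rule mod_zero)
  have ab: "ccomp E a1 b \<in> cmor E" using cat_comp[OF cE b a1 d1] .
  have cc: "ccod C (q (ccomp E a1 b)) = ccod C (q a1)" using comp_cod a1 b d1 by simp
  have "act (ccomp E a1 b) \<alpha> = act (ccomp E a1 b) \<zero>\<^bsub>H (ccod C (q a1))\<^esub>"
    using comp_zero[OF a1 b d1 al(1)] al(2) c act_zero[OF ab] cc by simp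
  then have "\<alpha> = \<zero>\<^bsub>H (ccod C (q a1))\<^esub>" using act_inj[OF ab] al z cc by simp
  then show ?thesis using al act_zero a1 by simp
qed

lemma exist:
  assumes a: "a' \<in> cmor E" and b: "b \<in> cmor E" and d: "cdom E a' = ccod E b" and f: "f \<in> cmor E"
    and qf: "q f = q (ccomp E a' b)"
  shows "\<exists>a\<in>cmor E. q a = q a' \<and> cdom E a = cdom E a' \<and> ccod E a = ccod E a' \<and> ccomp E a b = f"
proof -
  have ab: "ccomp E a' b \<in> cmor E" using cat_comp[OF cE b a d] .
  have cc: "ccod C (q (ccomp E a' b)) = ccod C (q a')" using comp_cod a b d by simp
  obtain \<gamma> where g: "\<gamma> \<in> carrier (H (ccod C (q a')))" "f = act (ccomp E a' b) \<gamma>"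
    using act_surj[OF ab f qf] cc by metis
  have m: "act a' \<gamma> \<in> cmor E" by (rule act_mor[OF a g(1)])
  show ?thesis
    apply (rule bexI[where x="act a' \<gamma>"])
    using act_q[OF a g(1)] act_dom[OF a g(1)] act_cod[OF a g(1)] comp_zero[OF a b d g(1)] g(2) m by simp_all
qed

lemma groupoidE: "groupoid E"
proof (rule left_inv_groupoid[OF cE])
  fix e assume e: "e \<in> cmor E"
  obtain g where g: "is_inverse C (q e) g" using grpd qmor[OF e] unfolding groupoid_def by blast
  have gm: "g \<in> cmor C" "cdom C g = ccod C (q e)" "ccod C g = cdom C (q e)" "ccomp C g (q e) = cid C (cdom C (q e))"
    using g unfolding is_inverse_def by auto
  obtain g' where g': "g' \<in> cmor E" "q g' = g" using lift[OF gm(1)] by blast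
  have d: "cdom E g' = ccod E e" using qdom[OF g'(1)] g'(2) gm(2) qcod[OF e] by simp
  have de: "cdom E e \<in> cobj E" using cat_dom[OF cE e] .
  have idm: "cid E (cdom E e) \<in> cmor E" using cat_id[OF cE de] .
  have "q (cid E (cdom E e)) = q (ccomp E g' e)"
    using qcomp[OF e g'(1) d] g'(2) gm(4) qid[OF de] qdom[OF e] by simp
  from exist[OF g'(1) e d idm this] obtain h where
    h: "h \<in> cmor E" "cdom E h = cdom E g'" "ccod E h = ccod E g'" "ccomp E h e = cid E (cdom E e)" by blast
  have "ccod E g' = cdom E e" using qcod[OF g'(1)] g'(2) gm(3) qdom[OF e] by simp
  then show "\<exists>h\<in>cmor E. cdom E h = ccod E e \<and> ccod E h = cdom E e \<and> ccomp E h e = cid E (cdom E e)"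
    using h d by auto
qed

lemma q_inv: assumes e: "e \<in> cmor E" shows "q (inv_mor E e) = inv_mor C (q e)"
proof -
  have "is_inverse C (q e) (q (inv_mor E e))"
    by (rule functor_inverse[OF qfun cE e inv_mor_is[OF groupoidE e]])
  then show ?thesis using inv_eqI[OF grpd qmor[OF e]] by simp
qed

lemma carrier_eq: assumes x: "x \<in> cobj C" and y: "y \<in> cobj C" shows "carrier (H x) \<approx> carrier (H y)"
proof -
  obtain f where f: "f \<in> cmor C" "cdom C f = x" "ccod C f = y" using conn x y connected_def by metis
  note fi = inv_facts[OF grpd f(1)]
  have l1: "linear_map K (H x) (H y) (Hm f)" using linHm f by metis
  have l2: "linear_map K (H y) (H x) (Hm (inv_mor C f))" using linHm fi f by metis
  have "bij_betw (Hm f) (carrier (H x)) (carrier (H y))"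
  proof (rule bij_betw_byWitness[where f'="Hm (inv_mor C f)"])
    have cl: "\<And>f g v. f \<in> cmor C \<Longrightarrow> g \<in> cmor C \<Longrightarrow> cdom C g = ccod C f \<Longrightarrow>
        v \<in> carrier (H (cdom C f)) \<Longrightarrow> Hm (ccomp C g f) v = Hm g (Hm f v)"
      using Hfun unfolding mod_functor_def by blast
    have il: "\<And>x v. x \<in> cobj C \<Longrightarrow> v \<in> carrier (H x) \<Longrightarrow> Hm (cid C x) v = v"
      using Hfun unfolding mod_functor_def by blast
    show "\<forall>a\<in>carrier (H x). Hm (inv_mor C f) (Hm f a) = a"
      using cl[OF f(1) fi(1) fi(2)] fi(4) il[OF x] f by simp
    show "\<forall>a\<in>carrier (H y). Hm f (Hm (inv_mor C f) a) = a"
      using cl[OF fi(1) f(1)] fi(2,3,5) il[OF y] f by simp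
    show "Hm f ` carrier (H x) \<subseteq> carrier (H y)" using l1 unfolding linear_map_def by blast
    show "Hm (inv_mor C f) ` carrier (H y) \<subseteq> carrier (H x)" using l2 unfolding linear_map_def by blast
  qed
  then show ?thesis using eqpoll_def by blast
qed

lemma fiber: assumes b0: "b0 \<in> cmor C" shows "{b \<in> cmor E. q b = b0} \<approx> carrier (H (ccod C b0))"
proof -
  obtain b' where b': "b' \<in> cmor E" "q b' = b0" using lift b0 by blast
  have "bij_betw (act b') (carrier (H (ccod C b0))) {b \<in> cmor E. q b = b0}"
    unfolding bij_betw_def
  proof
    show "inj_on (act b') (carrier (H (ccod C b0)))"
    proof (rule inj_onI)
      fix x y assume "x \<in> carrier (H (ccod C b0))" "y \<in> carrier (H (ccod C b0))" "act b' x = act b' y"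
      then show "x = y" using act_inj[OF b'(1)] b'(2) by simp
    qed
    show "act b' ` carrier (H (ccod C b0)) = {b \<in> cmor E. q b = b0}"
    proof
      show "act b' ` carrier (H (ccod C b0)) \<subseteq> {b \<in> cmor E. q b = b0}"
      proof
        fix z assume "z \<in> act b' ` carrier (H (ccod C b0))"
        then obtain x where x: "x \<in> carrier (H (ccod C (q b')))" "z = act b' x" using b'(2) by blast
        show "z \<in> {b \<in> cmor E. q b = b0}" using act_mor[OF b'(1) x(1)] act_q[OF b'(1) x(1)] x(2) b'(2) by simp
      qed
      show "{b \<in> cmor E. q b = b0} \<subseteq> act b' ` carrier (H (ccod C b0))"
      proof
        fix z assume z: "z \<in> {b \<in> cmor E. q b = b0}"
        then obtain x where "x \<in> carrier (H (ccod C (q b')))" "z = act b' x"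
          using act_surj[OF b'(1), of z] b'(2) by auto
        then show "z \<in> act b' ` carrier (H (ccod C b0))" using b'(2) by simp
      qed
    qed
  qed
  then show ?thesis using eqpoll_def eqpoll_sym by blast
qed

lemma Spart: "is_partition (cmor C) S" using assoc unfolding association_schemoid_def quasi_schemoid_def by (elim conjE) assumption
lemma S_sub: "\<sigma> \<in> S \<Longrightarrow> \<sigma> \<subseteq> cmor C" using Spart unfolding is_partition_def by blast
lemma S_ne: "\<sigma> \<in> S \<Longrightarrow> \<sigma> \<noteq> {}" using Spart unfolding is_partition_def by blast
lemma S_disj: "\<sigma> \<in> S \<Longrightarrow> \<tau> \<in> S \<Longrightarrow> \<sigma> \<noteq> \<tau> \<Longrightarrow> \<sigma> \<inter> \<tau> = {}" using Spart unfolding is_partition_def by blast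

lemma q_img: assumes "\<tau> \<in> S" shows "q ` {e \<in> cmor E. q e \<in> \<tau>} = \<tau>"
proof
  show "q ` {e \<in> cmor E. q e \<in> \<tau>} \<subseteq> \<tau>" by auto
  show "\<tau> \<subseteq> q ` {e \<in> cmor E. q e \<in> \<tau>}"
  proof
    fix f assume f: "f \<in> \<tau>"
    then obtain e where "e \<in> cmor E" "q e = f" using lift S_sub[OF assms] by blast
    then show "f \<in> q ` {e \<in> cmor E. q e \<in> \<tau>}" using f by force
  qed
qed

lemma img_blk: assumes t: "\<tau> \<in> S" shows "img_block S q {e \<in> cmor E. q e \<in> \<tau>} = \<tau>"
  unfolding img_block_def q_img[OF t]
proof (rule the_equality)
  show "\<tau> \<in> S \<and> \<tau> \<subseteq> \<tau>" using t by simp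
  fix \<tau>' assume "\<tau>' \<in> S \<and> \<tau> \<subseteq> \<tau>'"
  then show "\<tau>' = \<tau>" using S_disj[OF t, of \<tau>'] S_ne[OF t] by blast
qed

lemma count:
  assumes t: "\<tau> \<in> S" and m: "\<mu> \<in> S" and f: "f \<in> cmor E"
  shows "pairs E {e \<in> cmor E. q e \<in> \<tau>} {e \<in> cmor E. q e \<in> \<mu>} f
     \<approx> Sigma (pairs C \<tau> \<mu> (q f)) (\<lambda>x. {b \<in> cmor E. q b = snd x})"
proof -
  let ?P = "pairs E {e \<in> cmor E. q e \<in> \<tau>} {e \<in> cmor E. q e \<in> \<mu>} f"
  let ?Q = "Sigma (pairs C \<tau> \<mu> (q f)) (\<lambda>x. {b \<in> cmor E. q b = snd x})"
  let ?phi = "\<lambda>(a, b). ((q a, q b), b)"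
  have "bij_betw ?phi ?P ?Q"
    unfolding bij_betw_def
  proof (intro conjI)
    show "inj_on ?phi ?P"
    proof (rule inj_onI)
      fix x y assume x: "x \<in> ?P" and y: "y \<in> ?P" and eq: "?phi x = ?phi y"
      obtain a1 b1 where x1: "x = (a1, b1)" by (cases x)
      obtain a2 b2 where y1: "y = (a2, b2)" by (cases y)
      have e: "q a1 = q a2" "b1 = b2" using eq x1 y1 by auto
      have "a1 = a2"
        using x y e cancel[of a1 a2 b1] unfolding x1 y1 pairs_def by auto
      then show "x = y" using x1 y1 e by simp
    qed
    show "?phi ` ?P = ?Q"
    proof
      show "?phi ` ?P \<subseteq> ?Q"
      proof
        fix z assume "z \<in> ?phi ` ?P"
        then obtain a b where p: "(a, b) \<in> ?P" and z: "z = ((q a, q b), b)" by auto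
        from p have a: "a \<in> cmor E" "q a \<in> \<tau>" and b: "b \<in> cmor E" "q b \<in> \<mu>"
          and d: "cdom E a = ccod E b" and c: "ccomp E a b = f" unfolding pairs_def by auto
        have "(q a, q b) \<in> pairs C \<tau> \<mu> (q f)"
          unfolding pairs_def using a b d c qdom[OF a(1)] qcod[OF b(1)] qcomp[OF b(1) a(1) d] by auto
        then show "z \<in> ?Q" using b z by auto
      qed
      show "?Q \<subseteq> ?phi ` ?P"
      proof
        fix z assume "z \<in> ?Q"
        then obtain a0 b0 b where x: "(a0, b0) \<in> pairs C \<tau> \<mu> (q f)" and b: "b \<in> cmor E" "q b = b0"
          and z: "z = ((a0, b0), b)" by auto
        from x have a0: "a0 \<in> \<tau>" and b0: "b0 \<in> \<mu>" and d0: "cdom C a0 = ccod C b0"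
          and c0: "ccomp C a0 b0 = q f" unfolding pairs_def by auto
        obtain a' where a': "a' \<in> cmor E" "q a' = a0" using lift S_sub[OF t] a0 by blast
        have d: "cdom E a' = ccod E b" using qdom[OF a'(1)] qcod[OF b(1)] a'(2) b(2) d0 by simp
        have "q f = q (ccomp E a' b)" using qcomp[OF b(1) a'(1) d] a'(2) b(2) c0 by simp
        from exist[OF a'(1) b(1) d f this] obtain a where
          a: "a \<in> cmor E" "q a = q a'" "cdom E a = cdom E a'" "ccomp E a b = f" by blast
        have inP: "(a, b) \<in> ?P" unfolding pairs_def using a a' a0 b b0 d by auto
        have ph: "((a0, b0), b) = ?phi (a, b)" using a a' b by simp
        show "z \<in> ?phi ` ?P" unfolding z using inP ph by blast
      qed
    qed
  qed
  then show ?thesis unfolding eqpoll_def by blast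
qed

lemma main_count:
  assumes t: "\<tau> \<in> S" and m: "\<mu> \<in> S" and f: "f \<in> cmor E" and g: "g \<in> cmor C"
  shows "pairs E {e \<in> cmor E. q e \<in> \<tau>} {e \<in> cmor E. q e \<in> \<mu>} f
     \<approx> carrier (H (ccod C g)) \<times> pairs C \<tau> \<mu> (q f)"
proof -
  have "Sigma (pairs C \<tau> \<mu> (q f)) (\<lambda>x. {b \<in> cmor E. q b = snd x})
      \<approx> Sigma (pairs C \<tau> \<mu> (q f)) (\<lambda>x. carrier (H (ccod C g)))"
  proof (rule Sigma_eqpoll_cong[where h=id, simplified])
    show "bij_betw id (pairs C \<tau> \<mu> (q f)) (pairs C \<tau> \<mu> (q f))" by (rule bij_betw_id)
  next
    fix x assume x: "x \<in> pairs C \<tau> \<mu> (q f)"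
    then have sx: "snd x \<in> cmor C" using S_sub[OF m] unfolding pairs_def by auto
    have "{b \<in> cmor E. q b = snd x} \<approx> carrier (H (ccod C (snd x)))" by (rule fiber[OF sx])
    also have "\<dots> \<approx> carrier (H (ccod C g))"
      by (rule carrier_eq[OF cat_cod[OF cC sx] cat_cod[OF cC g]])
    finally show "{b \<in> cmor E. q b = snd x} \<approx> carrier (H (ccod C g))" .
  qed
  then have "Sigma (pairs C \<tau> \<mu> (q f)) (\<lambda>x. {b \<in> cmor E. q b = snd x})
      \<approx> pairs C \<tau> \<mu> (q f) \<times> carrier (H (ccod C g))" by simp
  also have "\<dots> \<approx> carrier (H (ccod C g)) \<times> pairs C \<tau> \<mu> (q f)" by (rule times_commute_eqpoll)
  finally show ?thesis using count[OF t m f] eqpoll_trans by blast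
qed

lemma qS: "quasi_schemoid C S" using assoc unfolding association_schemoid_def by (elim conjE) assumption
lemma qS_c: "\<forall>\<sigma>\<in>S. \<forall>\<tau>\<in>S. \<forall>\<mu>\<in>S. \<forall>f\<in>\<mu>. \<forall>g\<in>\<mu>. pairs C \<sigma> \<tau> f \<approx> pairs C \<sigma> \<tau> g"
  using qS unfolding quasi_schemoid_def by (elim conjE) assumption
lemma Tm_blocks_c: "\<forall>\<sigma>\<in>S. Tm ` \<sigma> \<in> S" using assoc unfolding association_schemoid_def by (elim conjE) assumption
lemma Tm_blocks: "\<sigma> \<in> S \<Longrightarrow> Tm ` \<sigma> \<in> S" using Tm_blocks_c by blast
lemma Tm_Tm_c: "\<forall>f\<in>cmor C. Tm (Tm f) = f" using assoc unfolding association_schemoid_def by (elim conjE) assumption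
lemma Tm_Tm: "f \<in> cmor C \<Longrightarrow> Tm (Tm f) = f" using Tm_Tm_c by blast
lemma endo_c: "\<forall>\<sigma>\<in>S. (\<exists>f\<in>\<sigma>. cdom C f = ccod C f) \<longrightarrow> (\<forall>f\<in>\<sigma>. cdom C f = ccod C f)"
  using assoc unfolding association_schemoid_def by (elim conjE) assumption
lemma endoS: "\<sigma> \<in> S \<Longrightarrow> f \<in> \<sigma> \<Longrightarrow> cdom C f = ccod C f \<Longrightarrow> g \<in> \<sigma> \<Longrightarrow> cdom C g = ccod C g"
  using endo_c by blast
lemma contraT: "contra_endofunctor C To Tm" using assoc unfolding association_schemoid_def by (elim conjE) assumption
lemma contra_c: "\<forall>f\<in>cmor C. cdom C (Tm f) = To (ccod C f) \<and> ccod C (Tm f) = To (cdom C f)"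
  using contraT unfolding contra_endofunctor_def by (elim conjE) assumption

lemma To_id: assumes x: "x \<in> cobj C" shows "To x = x"
proof -
  have i: "cid C x \<in> cmor C" using cat_id[OF cC x] .
  have "cdom C (Tm (cid C x)) = To (ccod C (cid C x))" using contra_c i by blast
  moreover have "Tm (cid C x) = cid C x" using Tinv i inv_id[OF grpd x] by simp
  ultimately show ?thesis using cat_id_dom[OF cC x] cat_id_cod[OF cC x] by simp
qed

abbreviation "qinv \<sigma> \<equiv> {e \<in> cmor E. q e \<in> \<sigma>}"

lemma part_union1: "\<Union> (qinv ` S) \<subseteq> cmor E"
proof
  fix x assume "x \<in> \<Union> (qinv ` S)"
  then obtain \<sigma> where "\<sigma> \<in> S" "x \<in> qinv \<sigma>" by (rule UnionE) (erule imageE, simp)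
  then show "x \<in> cmor E" by simp
qed

lemma part_union2: "cmor E \<subseteq> \<Union> (qinv ` S)"
proof
  fix e assume e: "e \<in> cmor E"
  have U: "\<Union>S = cmor C" using Spart unfolding is_partition_def by blast
  have "q e \<in> \<Union>S" using qmor[OF e] U by simp
  then obtain \<sigma> where "\<sigma> \<in> S" "q e \<in> \<sigma>" by blast
  then show "e \<in> \<Union> (qinv ` S)" using e by blast
qed

lemma part_ne: assumes s: "\<sigma>0 \<in> S" shows "qinv \<sigma>0 \<noteq> {}"
proof
  assume "qinv \<sigma>0 = {}"
  then have "q ` qinv \<sigma>0 = {}" by simp
  then show False using q_img[OF s] S_ne[OF s] by simp
qed

lemma part_disj: assumes s: "\<sigma>0 \<in> S" "\<tau>0 \<in> S" and ne: "qinv \<sigma>0 \<noteq> qinv \<tau>0"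
  shows "qinv \<sigma>0 \<inter> qinv \<tau>0 = {}"
proof -
  have "\<sigma>0 \<noteq> \<tau>0" using ne by blast
  then have "\<sigma>0 \<inter> \<tau>0 = {}" using S_disj[OF s] by blast
  then show ?thesis by blast
qed

lemma part_eq: assumes s: "\<sigma>0 \<in> S" "\<tau>0 \<in> S" "\<mu>0 \<in> S" and f: "f \<in> qinv \<mu>0" and g: "g \<in> qinv \<mu>0"
  shows "pairs E (qinv \<sigma>0) (qinv \<tau>0) f \<approx> pairs E (qinv \<sigma>0) (qinv \<tau>0) g"
proof -
  have fE: "f \<in> cmor E" "q f \<in> \<mu>0" and gE: "g \<in> cmor E" "q g \<in> \<mu>0" using f g by auto
  have m: "q f \<in> cmor C" using qmor[OF fE(1)] .
  have 1: "pairs E (qinv \<sigma>0) (qinv \<tau>0) f \<approx> carrier (H (ccod C (q f))) \<times> pairs C \<sigma>0 \<tau>0 (q f)"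
    by (rule main_count[OF s(1) s(2) fE(1) m])
  have 2: "pairs C \<sigma>0 \<tau>0 (q f) \<approx> pairs C \<sigma>0 \<tau>0 (q g)"
    using qS_c s fE(2) gE(2) by blast
  have 3: "carrier (H (ccod C (q f))) \<times> pairs C \<sigma>0 \<tau>0 (q f) \<approx> carrier (H (ccod C (q f))) \<times> pairs C \<sigma>0 \<tau>0 (q g)"
    by (rule times_eqpoll_cong[OF eqpoll_refl 2])
  have 4: "pairs E (qinv \<sigma>0) (qinv \<tau>0) g \<approx> carrier (H (ccod C (q f))) \<times> pairs C \<sigma>0 \<tau>0 (q g)"
    by (rule main_count[OF s(1) s(2) gE(1) m])
  show ?thesis using eqpoll_trans[OF eqpoll_trans[OF 1 3] eqpoll_sym[OF 4]] .
qed

lemma final_quasi: "quasi_schemoid E (qinv ` S)"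
  unfolding quasi_schemoid_def is_partition_def
proof (intro conjI cE ballI impI)
  show "\<Union> (qinv ` S) = cmor E" by (rule equalityI[OF part_union1 part_union2])
next
  fix \<sigma> assume "\<sigma> \<in> qinv ` S"
  then obtain \<sigma>0 where "\<sigma>0 \<in> S" "\<sigma> = qinv \<sigma>0" by (rule imageE)
  then show "\<sigma> \<noteq> {}" using part_ne by simp
next
  fix \<sigma> \<tau> assume a: "\<sigma> \<in> qinv ` S" "\<tau> \<in> qinv ` S" "\<sigma> \<noteq> \<tau>"
  from a(1) obtain \<sigma>0 where s: "\<sigma>0 \<in> S" "\<sigma> = qinv \<sigma>0" by (rule imageE)
  from a(2) obtain \<tau>0 where t: "\<tau>0 \<in> S" "\<tau> = qinv \<tau>0" by (rule imageE)
  show "\<sigma> \<inter> \<tau> = {}" using part_disj[OF s(1) t(1)] a(3) s(2) t(2) by simp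
next
  fix \<sigma> \<tau> \<mu> f g assume a: "\<sigma> \<in> qinv ` S" "\<tau> \<in> qinv ` S" "\<mu> \<in> qinv ` S" "f \<in> \<mu>" "g \<in> \<mu>"
  from a(1) obtain \<sigma>0 where s: "\<sigma>0 \<in> S" "\<sigma> = qinv \<sigma>0" by (rule imageE)
  from a(2) obtain \<tau>0 where t: "\<tau>0 \<in> S" "\<tau> = qinv \<tau>0" by (rule imageE)
  from a(3) obtain \<mu>0 where m: "\<mu>0 \<in> S" "\<mu> = qinv \<mu>0" by (rule imageE)
  show "pairs E \<sigma> \<tau> f \<approx> pairs E \<sigma> \<tau> g"
    using part_eq[OF s(1) t(1) m(1)] a(4,5) s(2) t(2) m(2) by simp
qed

lemma inv_image_block: assumes s: "\<sigma> \<in> S" shows "inv_mor E ` qinv \<sigma> = qinv (Tm ` \<sigma>)"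
proof
  show "inv_mor E ` qinv \<sigma> \<subseteq> qinv (Tm ` \<sigma>)"
  proof
    fix z assume "z \<in> inv_mor E ` qinv \<sigma>"
    then obtain e where e: "e \<in> cmor E" "q e \<in> \<sigma>" "z = inv_mor E e" by blast
    have "q z = Tm (q e)" using q_inv[OF e(1)] Tinv qmor[OF e(1)] e(3) by simp
    then show "z \<in> qinv (Tm ` \<sigma>)" using inv_facts(1)[OF groupoidE e(1)] e by auto
  qed
  show "qinv (Tm ` \<sigma>) \<subseteq> inv_mor E ` qinv \<sigma>"
  proof
    fix z assume z: "z \<in> qinv (Tm ` \<sigma>)"
    then obtain f where f: "f \<in> \<sigma>" "q z = Tm f" "z \<in> cmor E" by blast
    have fC: "f \<in> cmor C" using S_sub[OF s] f(1) by blast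
    have iz: "inv_mor E z \<in> cmor E" using inv_facts(1)[OF groupoidE f(3)] .
    have "q (inv_mor E z) = f" using q_inv[OF f(3)] Tinv qmor[OF f(3)] f(2) Tm_Tm[OF fC] by simp
    then have "inv_mor E z \<in> qinv \<sigma>" using iz f(1) by simp
    moreover have "z = inv_mor E (inv_mor E z)" using inv_inv[OF groupoidE f(3)] by simp
    ultimately show "z \<in> inv_mor E ` qinv \<sigma>" by blast
  qed
qed

lemma final_assoc: "association_schemoid E (qinv ` S) id (inv_mor E)"
  unfolding association_schemoid_def
proof (intro conjI final_quasi)
  show "\<forall>\<sigma>\<in>qinv ` S. (\<exists>f\<in>\<sigma>. cdom E f = ccod E f) \<longrightarrow> (\<forall>f\<in>\<sigma>. cdom E f = ccod E f)"
  proof (intro ballI impI)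
    fix \<sigma> g assume "\<sigma> \<in> qinv ` S" and ex: "\<exists>f\<in>\<sigma>. cdom E f = ccod E f" and g: "g \<in> \<sigma>"
    then obtain \<sigma>0 where s: "\<sigma>0 \<in> S" "\<sigma> = qinv \<sigma>0" by blast
    obtain f where f: "f \<in> \<sigma>" "cdom E f = ccod E f" using ex by blast
    have fE: "f \<in> cmor E" "q f \<in> \<sigma>0" using f s by auto
    have gE: "g \<in> cmor E" "q g \<in> \<sigma>0" using g s by auto
    have "cdom C (q f) = ccod C (q f)" using qdom[OF fE(1)] qcod[OF fE(1)] f(2) by simp
    then have "cdom C (q g) = ccod C (q g)" using endoS[OF s(1) fE(2) _ gE(2)] by blast
    then show "cdom E g = ccod E g" using qdom[OF gE(1)] qcod[OF gE(1)] by simp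
  qed
  show "contra_endofunctor E id (inv_mor E)"
    unfolding contra_endofunctor_def
    using inv_facts[OF groupoidE] inv_id[OF groupoidE] inv_comp[OF groupoidE] by simp
  show "\<forall>x\<in>cobj E. id (id x) = x" by simp
  show "\<forall>f\<in>cmor E. inv_mor E (inv_mor E f) = f" using inv_inv[OF groupoidE] by blast
  show "\<forall>\<sigma>\<in>qinv ` S. inv_mor E ` \<sigma> \<in> qinv ` S"
    using inv_image_block Tm_blocks by auto
qed

lemma final_morph: "as_morphism E (qinv ` S) id (inv_mor E) C S To Tm id q"
  unfolding as_morphism_def
proof (intro conjI qfun)
  show "\<forall>\<sigma>\<in>qinv ` S. \<exists>\<tau>\<in>S. q ` \<sigma> \<subseteq> \<tau>" by blast
  show "\<forall>x\<in>cobj E. id (id x) = To (id x)" using To_id objE by simp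
  show "\<forall>f\<in>cmor E. q (inv_mor E f) = Tm (q f)" using q_inv Tinv qmor by simp
qed

lemma final:
  "quasi_schemoid E (qinv ` S)
    \<and> groupoid E
    \<and> association_schemoid E (qinv ` S) id (inv_mor E)
    \<and> as_morphism E (qinv ` S) id (inv_mor E) C S To Tm id q
    \<and> (\<forall>g\<in>cmor C. \<forall>g'\<in>cmor C. carrier (H (ccod C g)) \<approx> carrier (H (ccod C g')))
    \<and> (\<forall>\<sigma>\<in>qinv ` S. \<forall>\<tau>\<in>qinv ` S. \<forall>\<mu>\<in>qinv ` S. \<forall>f\<in>\<sigma>. \<forall>g\<in>cmor C.
         pairs E \<tau> \<mu> f \<approx>
           carrier (H (ccod C g)) \<times> pairs C (img_block S q \<tau>) (img_block S q \<mu>) (q f))"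
proof (intro conjI final_quasi groupoidE final_assoc final_morph ballI)
  fix g g' assume "g \<in> cmor C" "g' \<in> cmor C"
  then show "carrier (H (ccod C g)) \<approx> carrier (H (ccod C g'))"
    using carrier_eq cat_cod[OF cC] by blast
next
  fix \<sigma> \<tau> \<mu> f g assume "\<sigma> \<in> qinv ` S" "\<tau> \<in> qinv ` S" "\<mu> \<in> qinv ` S" and f: "f \<in> \<sigma>" and g: "g \<in> cmor C"
  then obtain \<sigma>0 \<tau>0 \<mu>0 where s: "\<sigma>0 \<in> S" "\<sigma> = qinv \<sigma>0" "\<tau>0 \<in> S" "\<tau> = qinv \<tau>0"
      "\<mu>0 \<in> S" "\<mu> = qinv \<mu>0" by blast
  have fE: "f \<in> cmor E" using f s by auto
  show "pairs E \<tau> \<mu> f \<approx> carrier (H (ccod C g)) \<times> pairs C (img_block S q \<tau>) (img_block S q \<mu>) (q f)"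
    using main_count[OF s(3) s(5) fE g] img_blk[OF s(3)] img_blk[OF s(5)] s by simp
qed

end

theorem theorem5p5:
  fixes C :: "('o, 'm) cat" and S :: "'m set set" and To :: "'o \<Rightarrow> 'o" and Tm :: "'m \<Rightarrow> 'm"
    and K :: "'k ring" and H :: "'o \<Rightarrow> ('k, 'v) module" and Hm :: "'m \<Rightarrow> 'v \<Rightarrow> 'v"
    and E :: "('o, 'e) cat" and q :: "'e \<Rightarrow> 'm" and act :: "'e \<Rightarrow> 'v \<Rightarrow> 'e"
  assumes assoc: "association_schemoid C S To Tm"
    and grpd: "groupoid C"
    and conn: "connected C"
    and Tinv: "\<forall>f\<in>cmor C. Tm f = inv_mor C f"
    and Hfun: "mod_functor C K H Hm"
    and ext: "linear_extension C K H Hm E q act"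
  defines "St \<equiv> (\<lambda>\<sigma>. {e \<in> cmor E. q e \<in> \<sigma>}) ` S"
  shows "quasi_schemoid E St
    \<and> groupoid E
    \<and> association_schemoid E St id (inv_mor E)
    \<and> as_morphism E St id (inv_mor E) C S To Tm id q
    \<and> (\<forall>g\<in>cmor C. \<forall>g'\<in>cmor C. carrier (H (ccod C g)) \<approx> carrier (H (ccod C g')))
    \<and> (\<forall>\<sigma>\<in>St. \<forall>\<tau>\<in>St. \<forall>\<mu>\<in>St. \<forall>f\<in>\<sigma>. \<forall>g\<in>cmor C.
         pairs E \<tau> \<mu> f \<approx>
           carrier (H (ccod C g)) \<times> pairs C (img_block S q \<tau>) (img_block S q \<mu>) (q f))"
  proof -
  interpret ctx55 C S To Tm K H Hm E q act
    by (rule ctx55.intro) (rule assoc grpd conn Tinv Hfun ext)+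
  show ?thesis unfolding St_def by (rule final)
qed

end
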